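(* Let $\mathbf p=(p_1,p_2,p_3,p_4)$ be an agreeable memory-one strategy for X with $\mathbf p\neq(1,1,0,0)$. Then $\mathbf p$ is of Nash type if and only if $$\frac{T-R}{R-S}\,p_3\le 1-p_2\qquad\text{and}\qquad \frac{T-R}{R-P}\,p_4\le 1-p_2 .$$ Moreover, $\mathbf p$ is good if and only if both of these inequalities are strict.
   Context: Iterated Prisoner's Dilemma: payoffs $T>R>P>S$ with $2R>T+S$; outcomes of a round are ordered $cc,cd,dc,dd$ (first letter X's play, second Y's; $c$ = cooperate, $d$ = defect); payoff vectors $\mathbf S_X=(R,S,T,P)$, $\mathbf S_Y=(R,T,S,P)$. A memory-one strategy for X is $\mathbf p=(p_1,p_2,p_3,p_4)\in[0,1]^4$, where $p_i$ is the probability that X plays $c$ in the next round given that the current round had the $i$-th outcome. A strategy pattern for Y is an arbitrary (possibly randomized and history-dependent) rule for Y's play in each round. Given initial plays and the rules used, let $\mathbf v^n$ be the probability distribution of the outcome of round $n$; a limit distribution is any limit point $\mathbf v$ of the Cesàro averages $\frac1n\sum_{k=1}^n\mathbf v^k$, and the associated expected payoffs are $s_X=\langle\mathbf v\cdot\mathbf S_X\rangle$, $s_Y=\langle\mathbf v\cdot\mathbf S_Y\rangle$. $\mathbf p$ is agreeable if $p_1=1$. $\mathbf p$ is of Nash type if it is agreeable and, for every strategy pattern of Y and every associated limit distribution, $s_Y\ge R$ implies $s_Y=R$. $\mathbf p$ is good if it is agreeable and, for every strategy pattern of Y and every associated limit distribution, $s_Y\ge R$ implies $s_Y=s_X=R$.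 *)

theory Defs
  imports Complex_Main
begin

text \<open>Outcomes of one round: first letter X's play, second Y's play.\<close>
datatype outcome = CC | CD | DC | DD

text \<open>A memory-one strategy for X is a function outcome => [0,1]; p CC = p1, p CD = p2,
  p DC = p3, p DD = p4.\<close>
definition mem1 :: "(outcome \<Rightarrow> real) \<Rightarrow> bool" where
  "mem1 p \<longleftrightarrow> (\<forall>w. 0 \<le> p w \<and> p w \<le> 1)"

definition agreeable :: "(outcome \<Rightarrow> real) \<Rightarrow> bool" where
  "agreeable p \<longleftrightarrow> p CC = 1"

text \<open>A strategy pattern for Y (behavioural form): the probability that Y cooperates in the
  next round as a function of the whole history of previous outcomes
  (histories are lists, most recent outcome first; the empty history gives Y's initial play).\<close>
definition Y_pattern :: "(outcome list \<Rightarrow> real) \<Rightarrow> bool" where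
  "Y_pattern y \<longleftrightarrow> (\<forall>h. 0 \<le> y h \<and> y h \<le> 1)"

definition step_prob ::
  "(outcome \<Rightarrow> real) \<Rightarrow> real \<Rightarrow> (outcome list \<Rightarrow> real) \<Rightarrow> outcome list \<Rightarrow> outcome \<Rightarrow> real" where
  "step_prob p p0 y h w =
     (let a = (case h of [] \<Rightarrow> p0 | w' # _ \<Rightarrow> p w'); b = y h in
      (case w of CC \<Rightarrow> a * b | CD \<Rightarrow> a * (1 - b) | DC \<Rightarrow> (1 - a) * b | DD \<Rightarrow> (1 - a) * (1 - b)))"

fun hist_prob ::
  "(outcome \<Rightarrow> real) \<Rightarrow> real \<Rightarrow> (outcome list \<Rightarrow> real) \<Rightarrow> outcome list \<Rightarrow> real" where
  "hist_prob p p0 y [] = 1"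
| "hist_prob p p0 y (w # h) = hist_prob p p0 y h * step_prob p p0 y h w"

fun hists :: "nat \<Rightarrow> outcome list list" where
  "hists 0 = [[]]"
| "hists (Suc n) = concat (map (\<lambda>h. map (\<lambda>w. w # h) [CC, CD, DC, DD]) (hists n))"

text \<open>v^n: distribution of the outcome of round n (n >= 1).\<close>
definition vdist ::
  "(outcome \<Rightarrow> real) \<Rightarrow> real \<Rightarrow> (outcome list \<Rightarrow> real) \<Rightarrow> nat \<Rightarrow> outcome \<Rightarrow> real" where
  "vdist p p0 y n w = sum_list (map (hist_prob p p0 y) (filter (\<lambda>h. hd h = w) (hists n)))"

definition cesaro ::
  "(outcome \<Rightarrow> real) \<Rightarrow> real \<Rightarrow> (outcome list \<Rightarrow> real) \<Rightarrow> nat \<Rightarrow> outcome \<Rightarrow> real" where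
  "cesaro p p0 y n w = (\<Sum>k=1..n. vdist p p0 y k w) / real n"

definition limit_dist ::
  "(outcome \<Rightarrow> real) \<Rightarrow> real \<Rightarrow> (outcome list \<Rightarrow> real) \<Rightarrow> (outcome \<Rightarrow> real) \<Rightarrow> bool" where
  "limit_dist p p0 y v \<longleftrightarrow>
     (\<exists>r::nat \<Rightarrow> nat. strict_mono r \<and> (\<forall>w. (\<lambda>n. cesaro p p0 y (r n) w) \<longlonglongrightarrow> v w))"

definition payX :: "real \<Rightarrow> real \<Rightarrow> real \<Rightarrow> real \<Rightarrow> (outcome \<Rightarrow> real) \<Rightarrow> real" where
  "payX T R P S v = v CC * R + v CD * S + v DC * T + v DD * P"

definition payY :: "real \<Rightarrow> real \<Rightarrow> real \<Rightarrow> real \<Rightarrow> (outcome \<Rightarrow> real) \<Rightarrow> real" where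
  "payY T R P S v = v CC * R + v CD * T + v DC * S + v DD * P"

definition nash_type :: "real \<Rightarrow> real \<Rightarrow> real \<Rightarrow> real \<Rightarrow> (outcome \<Rightarrow> real) \<Rightarrow> bool" where
  "nash_type T R P S p \<longleftrightarrow> agreeable p \<and>
     (\<forall>p0 y v. 0 \<le> p0 \<and> p0 \<le> 1 \<and> Y_pattern y \<and> limit_dist p p0 y v \<and> payY T R P S v \<ge> R
        \<longrightarrow> payY T R P S v = R)"

definition good :: "real \<Rightarrow> real \<Rightarrow> real \<Rightarrow> real \<Rightarrow> (outcome \<Rightarrow> real) \<Rightarrow> bool" where
  "good T R P S p \<longleftrightarrow> agreeable p \<and>
     (\<forall>p0 y v. 0 \<le> p0 \<and> p0 \<le> 1 \<and> Y_pattern y \<and> limit_dist p p0 y v \<and> payY T R P S v \<ge> R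
        \<longrightarrow> payY T R P S v = R \<and> payX T R P S v = R)"

end

theory Submission
  imports Defs "HOL-Analysis.Analysis"
begin


definition E :: "(outcome \<Rightarrow> real) \<Rightarrow> real \<Rightarrow> (outcome list \<Rightarrow> real) \<Rightarrow> nat \<Rightarrow> (outcome list \<Rightarrow> real) \<Rightarrow> real" where
  "E p p0 y n f = (\<Sum>h\<leftarrow>hists n. hist_prob p p0 y h * f h)"

lemma sum_concat_aux:
  "(\<Sum>h\<leftarrow>concat (map (\<lambda>h. map (\<lambda>w. w # h) [CC, CD, DC, DD]) L). F h)
   = (\<Sum>h\<leftarrow>L. F (CC#h) + F (CD#h) + F (DC#h) + F (DD#h))"
  by (induct L) (simp_all add: algebra_simps)

lemma E_Suc:
  "E p p0 y (Suc n) f = E p p0 y n (\<lambda>h. step_prob p p0 y h CC * f (CC#h) + step_prob p p0 y h CD * f (CD#h)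
      + step_prob p p0 y h DC * f (DC#h) + step_prob p p0 y h DD * f (DD#h))"
  unfolding E_def hists.simps(2) sum_concat_aux by (simp add: algebra_simps)

lemma E_add: "E p p0 y n f + E p p0 y n g = E p p0 y n (\<lambda>h. f h + g h)"
  unfolding E_def by (simp add: sum_list_addf[symmetric] distrib_left)

lemma E_cmult: "c * E p p0 y n f = E p p0 y n (\<lambda>h. c * f h)"
  unfolding E_def by (simp add: sum_list_const_mult[symmetric] algebra_simps)

lemma E_cong: "(\<And>h. f h = g h) \<Longrightarrow> E p p0 y n f = E p p0 y n g"
  by (rule arg_cong[where f="E p p0 y n"]) (rule ext)

lemma step_sum: "step_prob p p0 y h CC + step_prob p p0 y h CD + step_prob p p0 y h DC + step_prob p p0 y h DD = 1"
  by (simp add: step_prob_def Let_def algebra_simps)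

lemma E_one: "E p p0 y n (\<lambda>_. 1) = 1"
proof (induct n)
  case 0 then show ?case by (simp add: E_def)
next
  case (Suc n)
  have "E p p0 y (Suc n) (\<lambda>_. 1) = E p p0 y n (\<lambda>_. 1)"
    unfolding E_Suc by (simp only: mult_1_right step_sum)
  then show ?case using Suc by simp
qed

lemma E_zero: "E p p0 y n (\<lambda>_. 0) = 0"
  unfolding E_def by simp

lemma vdist_Suc: "vdist p p0 y (Suc n) w = E p p0 y n (\<lambda>h. step_prob p p0 y h w)"
proof -
  have "vdist p p0 y (Suc n) w = E p p0 y (Suc n) (\<lambda>h. if hd h = w then 1 else 0)"
    unfolding vdist_def E_def sum_list_map_filter' by (simp add: if_distrib cong: if_cong)
  also have "\<dots> = E p p0 y n (\<lambda>h. step_prob p p0 y h w)"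
    unfolding E_Suc by (cases w) simp_all
  finally show ?thesis .
qed

definition valid :: "(outcome \<Rightarrow> real) \<Rightarrow> real \<Rightarrow> (outcome list \<Rightarrow> real) \<Rightarrow> bool" where "valid p p0 y \<longleftrightarrow> mem1 p \<and> 0 \<le> p0 \<and> p0 \<le> 1 \<and> Y_pattern y"

lemma step_nonneg: "valid p p0 y \<Longrightarrow> step_prob p p0 y h w \<ge> 0"
proof -
  assume v: "valid p p0 y"
  define a where "a = (case h of [] \<Rightarrow> p0 | w' # _ \<Rightarrow> p w')"
  have a: "0 \<le> a \<and> a \<le> 1" using v unfolding a_def valid_def mem1_def by (cases h) auto
  have b: "0 \<le> y h \<and> y h \<le> 1" using v unfolding valid_def Y_pattern_def by auto
  show ?thesis using a b unfolding step_prob_def Let_def a_def[symmetric]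
    by (cases w) auto
qed

lemma hist_nonneg: "valid p p0 y \<Longrightarrow> hist_prob p p0 y h \<ge> 0"
  by (induct h) (simp_all add: step_nonneg)

lemma E_nonneg: "valid p p0 y \<Longrightarrow> (\<And>h. f h \<ge> 0) \<Longrightarrow> E p p0 y n f \<ge> 0"
  unfolding E_def by (intro sum_list_nonneg) (auto simp: hist_nonneg)

lemma vdist_nonneg: "valid p p0 y \<Longrightarrow> vdist p p0 y n w \<ge> 0"
  unfolding vdist_def by (intro sum_list_nonneg) (auto simp: hist_nonneg)

lemma vdist_sum: "vdist p p0 y (Suc n) CC + vdist p p0 y (Suc n) CD + vdist p p0 y (Suc n) DC + vdist p p0 y (Suc n) DD = 1"
proof -
  have "E p p0 y n (\<lambda>h. step_prob p p0 y h CC) + E p p0 y n (\<lambda>h. step_prob p p0 y h CD)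
     + E p p0 y n (\<lambda>h. step_prob p p0 y h DC) + E p p0 y n (\<lambda>h. step_prob p p0 y h DD)
     = E p p0 y n (\<lambda>_. 1)"
    unfolding E_add step_sum by (rule refl)
  then show ?thesis by (simp add: vdist_Suc E_one)
qed

lemma E_hd:
  assumes "\<And>w h. f (w#h) = g w"
  shows "E p p0 y (Suc n) f = g CC * vdist p p0 y (Suc n) CC + g CD * vdist p p0 y (Suc n) CD
     + g DC * vdist p p0 y (Suc n) DC + g DD * vdist p p0 y (Suc n) DD"
proof -
  have "E p p0 y (Suc n) f = E p p0 y n (\<lambda>h. g CC * step_prob p p0 y h CC + g CD * step_prob p p0 y h CD
      + g DC * step_prob p p0 y h DC + g DD * step_prob p p0 y h DD)"
    unfolding E_Suc assms by (simp add: mult.commute)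
  also have "\<dots> = g CC * vdist p p0 y (Suc n) CC + g CD * vdist p p0 y (Suc n) CD
     + g DC * vdist p p0 y (Suc n) DC + g DD * vdist p p0 y (Suc n) DD"
    by (simp add: vdist_Suc E_cmult E_add)
  finally show ?thesis .
qed

lemma coopX: "vdist p p0 y (Suc m) CC + vdist p p0 y (Suc m) CD = E p p0 y m (\<lambda>h. case h of [] \<Rightarrow> p0 | w # _ \<Rightarrow> p w)"
  unfolding vdist_Suc E_add by (rule E_cong) (simp add: step_prob_def Let_def algebra_simps)

lemma coopY: "vdist p p0 y (Suc m) CC + vdist p p0 y (Suc m) DC = E p p0 y m y"
  unfolding vdist_Suc E_add by (rule E_cong) (simp add: step_prob_def Let_def algebra_simps)

definition lin :: "(outcome \<Rightarrow> real) \<Rightarrow> (outcome \<Rightarrow> real) \<Rightarrow> real" where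
  "lin a v = a CC * v CC + a CD * v CD + a DC * v DC + a DD * v DD"

lemma X_identity:
  "lin (\<lambda>w. if w = CC \<or> w = CD then 1 else 0) (vdist p p0 y (Suc (Suc n))) = lin p (vdist p p0 y (Suc n))"
proof -
  have "lin (\<lambda>w. if w = CC \<or> w = CD then 1 else 0) (vdist p p0 y (Suc (Suc n)))
     = E p p0 y (Suc n) (\<lambda>h. case h of [] \<Rightarrow> p0 | w # _ \<Rightarrow> p w)"
    unfolding coopX[symmetric] lin_def by simp
  also have "\<dots> = lin p (vdist p p0 y (Suc n))"
    unfolding lin_def by (rule E_hd) simp
  finally show ?thesis .
qed

lemma Y_identity:
  assumes "\<And>w h. y (w#h) = q w"
  shows "lin (\<lambda>w. if w = CC \<or> w = DC then 1 else 0) (vdist p p0 y (Suc (Suc n))) = lin q (vdist p p0 y (Suc n))"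
proof -
  have "lin (\<lambda>w. if w = CC \<or> w = DC then 1 else 0) (vdist p p0 y (Suc (Suc n)))
     = E p p0 y (Suc n) y"
    unfolding coopY[symmetric] lin_def by simp
  also have "\<dots> = lin q (vdist p p0 y (Suc n))"
    unfolding lin_def by (rule E_hd) (rule assms)
  finally show ?thesis .
qed

lemma lin_bound:
  assumes "valid p p0 y" "\<And>w. \<bar>a w\<bar> \<le> 1"
  shows "\<bar>lin a (vdist p p0 y (Suc n))\<bar> \<le> 1"
proof -
  have b: "\<bar>a w * vdist p p0 y (Suc n) w\<bar> \<le> vdist p p0 y (Suc n) w" for w
  proof -
    have "\<bar>a w * vdist p p0 y (Suc n) w\<bar> = \<bar>a w\<bar> * vdist p p0 y (Suc n) w"
      using vdist_nonneg[OF assms(1)] by (simp add: abs_mult)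
    also have "\<dots> \<le> 1 * vdist p p0 y (Suc n) w"
      by (rule mult_right_mono) (use assms vdist_nonneg in auto)
    finally show ?thesis by simp
  qed
  have "\<bar>lin a (vdist p p0 y (Suc n))\<bar> \<le> vdist p p0 y (Suc n) CC + vdist p p0 y (Suc n) CD + vdist p p0 y (Suc n) DC + vdist p p0 y (Suc n) DD"
    unfolding lin_def using b[of CC] b[of CD] b[of DC] b[of DD] by linarith
  then show ?thesis using vdist_sum by simp
qed

lemma ces_lin: "lin a (cesaro p p0 y n) = (\<Sum>k=1..n. lin a (vdist p p0 y k)) / real n"
  unfolding lin_def cesaro_def by (simp add: sum.distrib sum_distrib_left add_divide_distrib)

lemma limit_identity:
  assumes ld: "limit_dist p p0 y v"
    and idt: "\<And>k. k \<ge> 1 \<Longrightarrow> lin a (vdist p p0 y (Suc k)) = lin c (vdist p p0 y k)"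
    and bnd: "\<And>k. k \<ge> 1 \<Longrightarrow> \<bar>lin a (vdist p p0 y k)\<bar> \<le> B"
  shows "lin a v = lin c v"
proof -
  obtain r where r: "strict_mono r" "\<And>w. (\<lambda>n. cesaro p p0 y (r n) w) \<longlonglongrightarrow> v w"
    using ld unfolding limit_dist_def by blast
  have lim: "(\<lambda>n. lin b (cesaro p p0 y (r n))) \<longlonglongrightarrow> lin b v" for b
    unfolding lin_def by (intro tendsto_intros r(2))
  define z where "z k = lin a (vdist p p0 y k)" for k
  define D where "D n = lin c (cesaro p p0 y n) - lin a (cesaro p p0 y n)" for n
  have Dn: "D n = (z (Suc n) - z 1) / real n" if "n \<ge> 1" for n
  proof -
    have "(\<Sum>k=1..n. lin c (vdist p p0 y k)) - (\<Sum>k=1..n. lin a (vdist p p0 y k))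
        = (\<Sum>k=1..n. z (Suc k) - z k)"
      unfolding sum_subtractf[symmetric] z_def using idt by (intro sum.cong) auto
    also have "\<dots> = z (Suc n) - z 1" using that by (intro sum_Suc_diff) simp
    finally show ?thesis unfolding D_def ces_lin diff_divide_distrib[symmetric] by simp
  qed
  have "D \<longlonglongrightarrow> 0"
  proof (rule Lim_null_comparison)
    show "\<forall>\<^sub>F n in sequentially. norm (D n) \<le> 2 * B / real n"
    proof (rule eventually_sequentiallyI[of 1])
      fix n :: nat assume n: "n \<ge> 1"
      have "\<bar>z (Suc n) - z 1\<bar> \<le> 2 * B" using bnd[of "Suc n"] bnd[of 1] unfolding z_def by simp
      then show "norm (D n) \<le> 2 * B / real n" using n unfolding Dn[OF n]
        by (simp add: divide_right_mono)
    qed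
    show "(\<lambda>n. 2 * B / real n) \<longlonglongrightarrow> 0" by (rule lim_const_over_n)
  qed
  then have "(D \<circ> r) \<longlonglongrightarrow> 0" using r(1) by (rule LIMSEQ_subseq_LIMSEQ)
  moreover have "(D \<circ> r) \<longlonglongrightarrow> lin c v - lin a v"
    unfolding D_def o_def by (intro tendsto_diff lim)
  ultimately have "lin c v - lin a v = 0" using LIMSEQ_unique by blast
  then show ?thesis by simp
qed

lemma limit_props:
  assumes "valid p p0 y" "limit_dist p p0 y v"
  shows "v CC \<ge> 0" "v CD \<ge> 0" "v DC \<ge> 0" "v DD \<ge> 0" "v CC + v CD + v DC + v DD = 1"
proof -
  obtain r where r: "strict_mono r" "\<And>w. (\<lambda>n. cesaro p p0 y (r n) w) \<longlonglongrightarrow> v w"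
    using assms unfolding limit_dist_def by blast
  have nn: "v w \<ge> 0" for w
  proof (rule LIMSEQ_le_const[OF r(2)])
    show "\<exists>N. \<forall>n\<ge>N. 0 \<le> cesaro p p0 y (r n) w"
      unfolding cesaro_def by (auto intro!: divide_nonneg_nonneg sum_nonneg vdist_nonneg assms(1))
  qed
  then show "v CC \<ge> 0" "v CD \<ge> 0" "v DC \<ge> 0" "v DD \<ge> 0" by auto
  have "(\<lambda>n. lin (\<lambda>_. 1) (cesaro p p0 y (r n))) \<longlonglongrightarrow> lin (\<lambda>_. 1) v"
    unfolding lin_def by (intro tendsto_intros r(2))
  moreover have "lin (\<lambda>_. 1) (cesaro p p0 y n) = 1" if "n \<ge> 1" for n
  proof -
    have "(\<Sum>k=1..n. lin (\<lambda>_. 1) (vdist p p0 y k)) = (\<Sum>k=1..n. 1)"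
    proof (intro sum.cong refl)
      fix k assume "k \<in> {1..n}"
      then obtain m where "k = Suc m" by (cases k) auto
      then show "lin (\<lambda>_. 1) (vdist p p0 y k) = 1" using vdist_sum unfolding lin_def by simp
    qed
    then show ?thesis using that unfolding ces_lin by simp
  qed
  then have "\<forall>\<^sub>F n in sequentially. lin (\<lambda>_. 1) (cesaro p p0 y (r n)) = 1"
    using r(1) by (intro eventually_sequentiallyI[of 1]) (meson le_trans seq_suble)
  then have "(\<lambda>n. lin (\<lambda>_. 1) (cesaro p p0 y (r n))) \<longlonglongrightarrow> 1"
    by (rule tendsto_eventually)
  ultimately have "lin (\<lambda>_. 1) v = 1"
    using LIMSEQ_unique by blast
  then show "v CC + v CD + v DC + v DD = 1" unfolding lin_def by simp
qed



lemma vdist_le1: assumes v: "valid p p0 y" shows "vdist p p0 y (Suc m) w \<le> 1"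
  using vdist_sum[of p p0 y m] vdist_nonneg[OF v, of "Suc m" CC] vdist_nonneg[OF v, of "Suc m" CD]
    vdist_nonneg[OF v, of "Suc m" DC] vdist_nonneg[OF v, of "Suc m" DD]
  by (cases w) (hypsubst, linarith)+

lemma cesaro_bounds: "valid p p0 y \<Longrightarrow> 0 \<le> cesaro p p0 y n w \<and> cesaro p p0 y n w \<le> 1"
proof -
  assume v: "valid p p0 y"
  have "(\<Sum>k=1..n. vdist p p0 y k w) \<le> (\<Sum>k=1..n. 1)"
  proof (rule sum_mono)
    fix k assume "k \<in> {1..n}"
    then obtain m where "k = Suc m" by (cases k) auto
    then show "vdist p p0 y k w \<le> 1" using vdist_le1[OF v] by simp
  qed
  then have "(\<Sum>k=1..n. vdist p p0 y k w) \<le> real n" by simp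
  moreover have "(\<Sum>k=1..n. vdist p p0 y k w) \<ge> 0" by (intro sum_nonneg vdist_nonneg v)
  ultimately show ?thesis unfolding cesaro_def
    by (cases "n = 0") (auto simp: divide_le_eq_1)
qed

lemma limit_exists: "valid p p0 y \<Longrightarrow> \<exists>v. limit_dist p p0 y v"
proof -
  assume v: "valid p p0 y"
  define f where "f n = (cesaro p p0 y n CC, cesaro p p0 y n CD, cesaro p p0 y n DC, cesaro p p0 y n DD)" for n
  have "range f \<subseteq> {0..1::real} \<times> {0..1::real} \<times> {0..1::real} \<times> {0..1::real}"
    using cesaro_bounds[OF v] unfolding f_def by auto
  moreover have "bounded ({0..1::real} \<times> {0..1::real} \<times> {0..1::real} \<times> {0..1::real})"
    by (intro bounded_Times bounded_closed_interval)
  ultimately have "bounded (range f)" by (rule bounded_subset[rotated])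
  then obtain l r where r: "strict_mono r" "(f \<circ> r) \<longlonglongrightarrow> l"
    using bounded_imp_convergent_subsequence by blast
  define vv where "vv w = (case w of CC \<Rightarrow> fst l | CD \<Rightarrow> fst (snd l) | DC \<Rightarrow> fst (snd (snd l)) | DD \<Rightarrow> snd (snd (snd l)))" for w
  have "(\<lambda>n. cesaro p p0 y (r n) w) \<longlonglongrightarrow> vv w" for w
  proof (cases w)
    case CC then show ?thesis using tendsto_fst[OF r(2)] unfolding vv_def f_def o_def by simp
  next
    case CD then show ?thesis using tendsto_fst[OF tendsto_snd[OF r(2)]] unfolding vv_def f_def o_def by simp
  next
    case DC then show ?thesis using tendsto_fst[OF tendsto_snd[OF tendsto_snd[OF r(2)]]] unfolding vv_def f_def o_def by simp
  next
    case DD then show ?thesis using tendsto_snd[OF tendsto_snd[OF tendsto_snd[OF r(2)]]] unfolding vv_def f_def o_def by simp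
  qed
  then show ?thesis unfolding limit_dist_def using r(1) by blast
qed

lemma v_zero:
  assumes "\<And>h. step_prob p p0 y h w = 0" "limit_dist p p0 y v"
  shows "v w = 0"
proof -
  obtain r where r: "strict_mono r" "\<And>w. (\<lambda>n. cesaro p p0 y (r n) w) \<longlonglongrightarrow> v w"
    using assms unfolding limit_dist_def by blast
  have "cesaro p p0 y n w = 0" for n
  proof -
    have "(\<Sum>k=1..n. vdist p p0 y k w) = 0"
    proof (intro sum.neutral ballI)
      fix k assume "k \<in> {1..n}"
      then obtain m where "k = Suc m" by (cases k) auto
      then show "vdist p p0 y k w = 0" using assms(1) by (simp add: vdist_Suc E_zero)
    qed
    then show ?thesis unfolding cesaro_def by simp
  qed
  then have "(\<lambda>n. cesaro p p0 y (r n) w) \<longlonglongrightarrow> 0" by simp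
  then show ?thesis using r(2) LIMSEQ_unique by blast
qed

lemma X_limit:
  assumes "valid p p0 y" "limit_dist p p0 y v"
  shows "v CC + v CD = p CC * v CC + p CD * v CD + p DC * v DC + p DD * v DD"
proof -
  have "lin (\<lambda>w. if w = CC \<or> w = CD then 1 else 0) v = lin p v"
  proof (rule limit_identity[OF assms(2), where B=1])
    fix k :: nat assume "k \<ge> 1"
    then obtain m where k: "k = Suc m" by (cases k) auto
    show "lin (\<lambda>w. if w = CC \<or> w = CD then 1 else 0) (vdist p p0 y (Suc k)) = lin p (vdist p p0 y k)"
      unfolding k by (rule X_identity)
    show "\<bar>lin (\<lambda>w. if w = CC \<or> w = CD then 1 else 0) (vdist p p0 y k)\<bar> \<le> 1"
      unfolding k by (rule lin_bound[OF assms(1)]) simp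
  qed
  then show ?thesis unfolding lin_def by simp
qed



lemma Y_limit:
  assumes "valid p p0 y" "limit_dist p p0 y v" "\<And>w h. y (w#h) = q w" "\<And>w. \<bar>q w\<bar> \<le> 1"
  shows "v CC + v DC = q CC * v CC + q CD * v CD + q DC * v DC + q DD * v DD"
proof -
  have "lin (\<lambda>w. if w = CC \<or> w = DC then 1 else 0) v = lin q v"
  proof (rule limit_identity[OF assms(2), where B=1])
    fix k :: nat assume "k \<ge> 1"
    then obtain m where k: "k = Suc m" by (cases k) auto
    show "lin (\<lambda>w. if w = CC \<or> w = DC then 1 else 0) (vdist p p0 y (Suc k)) = lin q (vdist p p0 y k)"
      unfolding k by (rule Y_identity) (rule assms(3))
    show "\<bar>lin (\<lambda>w. if w = CC \<or> w = DC then 1 else 0) (vdist p p0 y k)\<bar> \<le> 1"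
      unfolding k by (rule lin_bound[OF assms(1)]) simp
  qed
  then show ?thesis unfolding lin_def by simp
qed


lemma alg_key:
  fixes d e v2 v3 v4 p2 p3 p4 f :: real
  assumes "v3 * p3 + v4 * p4 = v2 * (1 - p2)"
  shows "(1 - p2) * (d * v2 - e * v3 - f * v4) = v3 * (d * p3 - e * (1 - p2)) + v4 * (d * p4 - f * (1 - p2))"
proof -
  have "(1 - p2) * (d * v2 - e * v3 - f * v4) = d * (v2 * (1 - p2)) - e * v3 * (1 - p2) - f * v4 * (1 - p2)"
    by (simp add: algebra_simps)
  also have "\<dots> = d * (v3 * p3 + v4 * p4) - e * v3 * (1 - p2) - f * v4 * (1 - p2)" using assms by simp
  also have "\<dots> = v3 * (d * p3 - e * (1 - p2)) + v4 * (d * p4 - f * (1 - p2))" by (simp add: algebra_simps)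
  finally show ?thesis .
qed

lemma alg_suff:
  fixes d e f v2 v3 v4 p2 p3 p4 :: real
  assumes "v3 \<ge> 0" "v4 \<ge> 0" "p2 < 1" "v3 * p3 + v4 * p4 = v2 * (1 - p2)"
    "d * p3 \<le> e * (1 - p2)" "d * p4 \<le> f * (1 - p2)"
  shows "d * v2 - e * v3 - f * v4 \<le> 0"
proof -
  have "v3 * (d * p3 - e * (1 - p2)) \<le> 0" using assms by (intro mult_nonneg_nonpos) auto
  moreover have "v4 * (d * p4 - f * (1 - p2)) \<le> 0" using assms by (intro mult_nonneg_nonpos) auto
  ultimately have "(1 - p2) * (d * v2 - e * v3 - f * v4) \<le> 0" using alg_key[OF assms(4), where d=d and e=e and f=f] by linarith
  then show ?thesis using assms(3) by (simp add: mult_le_0_iff)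
qed

lemma alg_strict:
  fixes d e f v2 v3 v4 p2 p3 p4 :: real
  assumes "v3 \<ge> 0" "v4 \<ge> 0" "p2 < 1" "v3 * p3 + v4 * p4 = v2 * (1 - p2)"
    "d * p3 < e * (1 - p2)" "d * p4 < f * (1 - p2)" "d * v2 - e * v3 - f * v4 \<ge> 0"
  shows "v3 = 0" "v4 = 0" "v2 = 0"
proof -
  have a: "v3 * (d * p3 - e * (1 - p2)) \<le> 0" using assms by (intro mult_nonneg_nonpos) auto
  have b: "v4 * (d * p4 - f * (1 - p2)) \<le> 0" using assms by (intro mult_nonneg_nonpos) auto
  have "(1 - p2) * (d * v2 - e * v3 - f * v4) \<ge> 0" using assms(3,7) by (intro mult_nonneg_nonneg) auto
  then have c: "v3 * (d * p3 - e * (1 - p2)) + v4 * (d * p4 - f * (1 - p2)) \<ge> 0" using alg_key[OF assms(4), where d=d and e=e and f=f] by linarith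
  have "v3 * (d * p3 - e * (1 - p2)) = 0" using a b c by linarith
  moreover have "d * p3 - e * (1 - p2) \<noteq> 0" using assms(5) by linarith
  ultimately show v3: "v3 = 0" by simp
  have "v4 * (d * p4 - f * (1 - p2)) = 0" using a b c by linarith
  moreover have "d * p4 - f * (1 - p2) \<noteq> 0" using assms(6) by linarith
  ultimately show v4: "v4 = 0" by simp
  have "v2 * (1 - p2) = 0" using assms(4) unfolding v3 v4 by simp
  moreover have "1 - p2 \<noteq> 0" using assms(3) by simp
  ultimately show "v2 = 0" by simp
qed


lemma core_facts:
  assumes "valid p p0 y" "limit_dist p p0 y v" "p CC = 1"
  shows "v CC \<ge> 0" "v CD \<ge> 0" "v DC \<ge> 0" "v DD \<ge> 0" "v CC + v CD + v DC + v DD = 1"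
    "v DC * p DC + v DD * p DD = v CD * (1 - p CD)"
proof -
  show "v CC \<ge> 0" "v CD \<ge> 0" "v DC \<ge> 0" "v DD \<ge> 0" "v CC + v CD + v DC + v DD = 1"
    using limit_props[OF assms(1,2)] by auto
  have X: "v CC + v CD = v CC + p CD * v CD + p DC * v DC + p DD * v DD"
    using X_limit[OF assms(1,2)] assms(3) by simp
  have a: "v CD * (1 - p CD) = v CD - p CD * v CD" by (simp add: algebra_simps)
  have b: "v DC * p DC = p DC * v DC" "v DD * p DD = p DD * v DD" by simp_all
  show "v DC * p DC + v DD * p DD = v CD * (1 - p CD)" using X a b by linarith
qed

lemma payY_eq:
  assumes "v CC + v CD + v DC + v DD = 1"
  shows "payY T R P S v - R = (T - R) * v CD - (R - S) * v DC - (R - P) * v DD"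
proof -
  have "payY T R P S v - R = payY T R P S v - R * (v CC + v CD + v DC + v DD)" using assms by simp
  also have "\<dots> = (T - R) * v CD - (R - S) * v DC - (R - P) * v DD"
    unfolding payY_def by (simp add: algebra_simps)
  finally show ?thesis .
qed

lemma payX_eq:
  assumes "v CC + v CD + v DC + v DD = 1"
  shows "payX T R P S v - R = (T - R) * v DC - (R - S) * v CD - (R - P) * v DD"
proof -
  have "payX T R P S v - R = payX T R P S v - R * (v CC + v CD + v DC + v DD)" using assms by simp
  also have "\<dots> = (T - R) * v DC - (R - S) * v CD - (R - P) * v DD"
    unfolding payX_def by (simp add: algebra_simps)
  finally show ?thesis .
qed

lemma pcd_lt1:
  assumes "T > R" "R > P" "P > S" "mem1 p" "p CC = 1"
    "\<not> (p CC = 1 \<and> p CD = 1 \<and> p DC = 0 \<and> p DD = 0)"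
    "(T - R) * p DC \<le> (R - S) * (1 - p CD)" "(T - R) * p DD \<le> (R - P) * (1 - p CD)"
  shows "p CD < 1"
proof (rule ccontr)
  have pb: "0 \<le> p w \<and> p w \<le> 1" for w using assms(4) unfolding mem1_def by blast
  assume "\<not> p CD < 1"
  then have 1: "p CD = 1" using conjunct2[OF pb[of CD]] by linarith
  then have "(T - R) * p DC \<le> 0" "(T - R) * p DD \<le> 0" using assms(7,8) by simp_all
  then have "p DC \<le> 0" "p DD \<le> 0" using assms(1) by (simp_all add: mult_le_0_iff)
  then have "p DC = 0" "p DD = 0" using pb[of DC] pb[of DD] by auto
  then show False using assms(5,6) 1 by simp
qed

lemma suff_nash:
  assumes "T > R" "R > P" "P > S" "mem1 p" "p CC = 1"
    "\<not> (p CC = 1 \<and> p CD = 1 \<and> p DC = 0 \<and> p DD = 0)"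
    "(T - R) * p DC \<le> (R - S) * (1 - p CD)" "(T - R) * p DD \<le> (R - P) * (1 - p CD)"
    "valid p p0 y" "limit_dist p p0 y v"
  shows "payY T R P S v \<le> R"
proof -
  note cf = core_facts[OF assms(9,10,5)]
  have "p CD < 1" by (rule pcd_lt1[OF assms(1-8)])
  then have "(T - R) * v CD - (R - S) * v DC - (R - P) * v DD \<le> 0"
    using cf assms(7,8) by (intro alg_suff) auto
  then show ?thesis using payY_eq[OF cf(5), where T=T and R=R and P=P and S=S] by linarith
qed

lemma suff_good:
  assumes "T > R" "R > P" "P > S" "mem1 p" "p CC = 1"
    "(T - R) * p DC < (R - S) * (1 - p CD)" "(T - R) * p DD < (R - P) * (1 - p CD)"
    "valid p p0 y" "limit_dist p p0 y v" "payY T R P S v \<ge> R"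
  shows "payY T R P S v = R \<and> payX T R P S v = R"
proof -
  have pb: "0 \<le> p w \<and> p w \<le> 1" for w using assms(4) unfolding mem1_def by blast
  note cf = core_facts[OF assms(8,9,5)]
  have "p CD < 1"
  proof (rule ccontr)
    assume "\<not> p CD < 1"
    then have "p CD = 1" using conjunct2[OF pb[of CD]] by linarith
    then have "(T - R) * p DC < 0" using assms(6) by simp
    then have "p DC < 0" using assms(1) by (simp add: mult_less_0_iff)
    then show False using pb[of DC] by auto
  qed
  moreover have "(T - R) * v CD - (R - S) * v DC - (R - P) * v DD \<ge> 0"
    using payY_eq[OF cf(5), where T=T and R=R and P=P and S=S] assms(10) by linarith
  ultimately have z: "v DC = 0" "v DD = 0" "v CD = 0"
    using alg_strict[of "v DC" "v DD" "p CD" "p DC" "p DD" "v CD" "T - R" "R - S" "R - P"] cf assms(6,7)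
    by auto
  have "payY T R P S v - R = 0" using payY_eq[OF cf(5), where T=T and R=R and P=P and S=S] z by simp
  moreover have "payX T R P S v - R = 0" using payX_eq[OF cf(5), where T=T and R=R and P=P and S=S] z by simp
  ultimately show ?thesis by simp
qed

definition yA :: "outcome list \<Rightarrow> real" where
  "yA h = (case h of [] \<Rightarrow> 1 | w # _ \<Rightarrow> (if w = CC then 0 else 1))"

lemma valid_yA: "mem1 p \<Longrightarrow> valid p 0 yA"
  unfolding valid_def Y_pattern_def yA_def by (auto split: list.splits)

lemma valid_y0: "mem1 p \<Longrightarrow> valid p 0 (\<lambda>_. 0)"
  unfolding valid_def Y_pattern_def by auto

lemma yA_facts:
  assumes "mem1 p" "p CC = 1" "limit_dist p 0 yA v"
  shows "valid p 0 yA" "v DD = 0" "v CC = v CD"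
proof -
  show v: "valid p 0 yA" using assms(1) unfolding valid_def Y_pattern_def yA_def
    by (auto split: list.splits)
  have "step_prob p 0 yA h DD = 0" for h
    using assms(2) by (auto simp: step_prob_def yA_def split: list.splits)
  then show d: "v DD = 0" using v_zero assms(3) by blast
  have "v CC + v DC = (\<lambda>w. if w = CC then 0 else 1::real) CC * v CC + (\<lambda>w. if w = CC then 0 else 1::real) CD * v CD
      + (\<lambda>w. if w = CC then 0 else 1::real) DC * v DC + (\<lambda>w. if w = CC then 0 else 1::real) DD * v DD"
    by (rule Y_limit[OF v assms(3)]) (auto simp: yA_def)
  then show "v CC = v CD" using d by simp
qed

lemma y0_facts:
  assumes "mem1 p" "limit_dist p 0 (\<lambda>_. 0) v"
  shows "valid p 0 (\<lambda>_. 0)" "v CC = 0" "v DC = 0"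
proof -
  show "valid p 0 (\<lambda>_. 0)" using assms(1) unfolding valid_def Y_pattern_def by auto
  have "step_prob p 0 (\<lambda>_. 0) h CC = 0" "step_prob p 0 (\<lambda>_. 0) h DC = 0" for h
    by (auto simp: step_prob_def)
  then show "v CC = 0" "v DC = 0" using v_zero assms(2) by blast+
qed

lemma necA:
  assumes "T > R" "R > S" "mem1 p" "p CC = 1" "(T - R) * p DC > (R - S) * (1 - p CD)"
  shows "\<not> nash_type T R P S p"
proof
  assume nt: "nash_type T R P S p"
  have v: "valid p 0 yA" using valid_yA[OF assms(3)] .
  obtain v where ld: "limit_dist p 0 yA v" using limit_exists[OF v] by blast
  note yf = yA_facts[OF assms(3,4) ld]
  note cf = core_facts[OF v ld assms(4)]
  have key: "(1 - p CD) * ((T - R) * v CD - (R - S) * v DC - 0 * v DD)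
     = v DC * ((T - R) * p DC - (R - S) * (1 - p CD)) + v DD * ((T - R) * p DD - 0 * (1 - p CD))"
    by (rule alg_key[OF cf(6)])
  have pos: "(T - R) * v CD - (R - S) * v DC > 0"
  proof (cases "v DC = 0")
    case True
    then have "v CD = 1/2" using cf(5) yf by simp
    then show ?thesis using True assms(1) by simp
  next
    case False
    then have "v DC > 0" using cf(3) by simp
    then have "v DC * ((T - R) * p DC - (R - S) * (1 - p CD)) > 0" using assms(5) by simp
    then have "(1 - p CD) * ((T - R) * v CD - (R - S) * v DC) > 0" using key yf by simp
    moreover have "1 - p CD \<ge> 0" using assms(3) unfolding mem1_def by auto
    ultimately show ?thesis by (simp add: zero_less_mult_iff)
  qed
  have "payY T R P S v > R" using payY_eq[OF cf(5), where T=T and R=R and P=P and S=S] pos yf by simp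
  moreover have "0 \<le> (0::real)" "(0::real) \<le> 1" by simp_all
  ultimately show False using nt v ld unfolding nash_type_def valid_def by force
qed

lemma necB:
  assumes "T > R" "R > P" "mem1 p" "p CC = 1" "(T - R) * p DD > (R - P) * (1 - p CD)"
  shows "\<not> nash_type T R P S p"
proof
  assume nt: "nash_type T R P S p"
  have v: "valid p 0 (\<lambda>_. 0)" using valid_y0[OF assms(3)] .
  obtain v where ld: "limit_dist p 0 (\<lambda>_. 0) v" using limit_exists[OF v] by blast
  note yf = y0_facts[OF assms(3) ld]
  note cf = core_facts[OF v ld assms(4)]
  have key: "(1 - p CD) * ((T - R) * v CD - 0 * v DC - (R - P) * v DD)
     = v DC * ((T - R) * p DC - 0 * (1 - p CD)) + v DD * ((T - R) * p DD - (R - P) * (1 - p CD))"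
    by (rule alg_key[OF cf(6)])
  have pos: "(T - R) * v CD - (R - P) * v DD > 0"
  proof (cases "v DD = 0")
    case True
    then have "v CD = 1" using cf(5) yf by simp
    then show ?thesis using True assms(1) by simp
  next
    case False
    then have "v DD > 0" using cf(4) by simp
    then have "v DD * ((T - R) * p DD - (R - P) * (1 - p CD)) > 0" using assms(5) by simp
    then have "(1 - p CD) * ((T - R) * v CD - (R - P) * v DD) > 0" using key yf by simp
    moreover have "1 - p CD \<ge> 0" using assms(3) unfolding mem1_def by auto
    ultimately show ?thesis by (simp add: zero_less_mult_iff)
  qed
  have "payY T R P S v > R" using payY_eq[OF cf(5), where T=T and R=R and P=P and S=S] pos yf by simp
  moreover have "0 \<le> (0::real)" "(0::real) \<le> 1" by simp_all
  ultimately show False using nt v ld unfolding nash_type_def valid_def by force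
qed

lemma eqA:
  assumes "T > R" "R > S" "2 * R > T + S" "mem1 p" "p CC = 1" "p CD < 1"
    "(T - R) * p DC = (R - S) * (1 - p CD)"
  shows "\<not> good T R P S p"
proof
  assume gd: "good T R P S p"
  have v: "valid p 0 yA" using valid_yA[OF assms(4)] .
  obtain v where ld: "limit_dist p 0 yA v" using limit_exists[OF v] by blast
  note yf = yA_facts[OF assms(4,5) ld]
  note cf = core_facts[OF v ld assms(5)]
  have key: "(1 - p CD) * ((T - R) * v CD - (R - S) * v DC - 0 * v DD)
     = v DC * ((T - R) * p DC - (R - S) * (1 - p CD)) + v DD * ((T - R) * p DD - 0 * (1 - p CD))"
    by (rule alg_key[OF cf(6)])
  have v3: "v DC > 0"
  proof (rule ccontr)
    assume "\<not> v DC > 0"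
    then have "v DC = 0" using cf(3) by simp
    then have "v CD * (1 - p CD) = 0" using cf(6) yf by simp
    then have "v CD = 0" using assms(6) by simp
    then show False using cf(5) yf \<open>v DC = 0\<close> by simp
  qed
  have "(1 - p CD) * ((T - R) * v CD - (R - S) * v DC) = 0" using key yf assms(7) by simp
  then have e0: "(T - R) * v CD = (R - S) * v DC" using assms(6) by simp
  then have "payY T R P S v = R" using payY_eq[OF cf(5), where T=T and R=R and P=P and S=S] yf by simp
  have "(T - R) * ((T - R) * v DC - (R - S) * v CD) = (T - R) * (T - R) * v DC - (R - S) * ((T - R) * v CD)"
    by (simp add: algebra_simps)
  also have "\<dots> = (T - R) * (T - R) * v DC - (R - S) * ((R - S) * v DC)" using e0 by simp
  also have "\<dots> = v DC * (((T - R) - (R - S)) * ((T - R) + (R - S)))" by (simp add: algebra_simps)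
  finally have f1: "(T - R) * ((T - R) * v DC - (R - S) * v CD) = v DC * (((T - R) - (R - S)) * ((T - R) + (R - S)))" .
  have neg: "((T - R) - (R - S)) * ((T - R) + (R - S)) < 0" using assms(1,2,3) by (intro mult_neg_pos) auto
  have "v DC * (((T - R) - (R - S)) * ((T - R) + (R - S))) < 0" by (rule mult_pos_neg[OF v3 neg])
  then have "(T - R) * ((T - R) * v DC - (R - S) * v CD) < 0" using f1 by simp
  then have "(T - R) * v DC - (R - S) * v CD < 0" using assms(1) by (simp add: mult_less_0_iff)
  then have "payX T R P S v < R" using payX_eq[OF cf(5), where T=T and R=R and P=P and S=S] yf by simp
  moreover have "0 \<le> (0::real)" "(0::real) \<le> 1" by simp_all
  ultimately show False using gd v ld \<open>payY T R P S v = R\<close> unfolding good_def valid_def by force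
qed

lemma eqB:
  assumes "T > R" "R > S" "R > P" "mem1 p" "p CC = 1" "p CD < 1"
    "(T - R) * p DD = (R - P) * (1 - p CD)"
  shows "\<not> good T R P S p"
proof
  assume gd: "good T R P S p"
  have v: "valid p 0 (\<lambda>_. 0)" using valid_y0[OF assms(4)] .
  obtain v where ld: "limit_dist p 0 (\<lambda>_. 0) v" using limit_exists[OF v] by blast
  note yf = y0_facts[OF assms(4) ld]
  note cf = core_facts[OF v ld assms(5)]
  have key: "(1 - p CD) * ((T - R) * v CD - 0 * v DC - (R - P) * v DD)
     = v DC * ((T - R) * p DC - 0 * (1 - p CD)) + v DD * ((T - R) * p DD - (R - P) * (1 - p CD))"
    by (rule alg_key[OF cf(6)])
  have v4: "v DD > 0"
  proof (rule ccontr)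
    assume "\<not> v DD > 0"
    then have "v DD = 0" using cf(4) by simp
    then have "v CD * (1 - p CD) = 0" using cf(6) yf by simp
    then have "v CD = 0" using assms(6) by simp
    then show False using cf(5) yf \<open>v DD = 0\<close> by simp
  qed
  have "(1 - p CD) * ((T - R) * v CD - (R - P) * v DD) = 0" using key yf assms(7) by simp
  then have e0: "(T - R) * v CD = (R - P) * v DD" using assms(6) by simp
  then have "payY T R P S v = R" using payY_eq[OF cf(5), where T=T and R=R and P=P and S=S] yf by simp
  have "(R - S) * v CD \<ge> 0" using cf(2) assms(2) by simp
  moreover have "(R - P) * v DD > 0" using v4 assms(3) by simp
  ultimately have "payX T R P S v < R" using payX_eq[OF cf(5), where T=T and R=R and P=P and S=S] yf by simp
  moreover have "0 \<le> (0::real)" "(0::real) \<le> 1" by simp_all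
  ultimately show False using gd v ld \<open>payY T R P S v = R\<close> unfolding good_def valid_def by force
qed

lemma ratio_le: "(e::real) > 0 \<Longrightarrow> (d / e * x \<le> y) = (d * x \<le> e * y)"
  by (simp add: pos_divide_le_eq mult.commute)

lemma ratio_less: "(e::real) > 0 \<Longrightarrow> (d / e * x < y) = (d * x < e * y)"
  by (simp add: pos_divide_less_eq mult.commute)

theorem theorem1p5:
  fixes T R P S :: real and p :: "outcome \<Rightarrow> real"
  assumes "T > R" and "R > P" and "P > S" and "2 * R > T + S"
    and "mem1 p" and "agreeable p"
    and "\<not> (p CC = 1 \<and> p CD = 1 \<and> p DC = 0 \<and> p DD = 0)"
  shows "(nash_type T R P S p \<longleftrightarrow>
            (T - R) / (R - S) * p DC \<le> 1 - p CD \<and> (T - R) / (R - P) * p DD \<le> 1 - p CD)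
       \<and> (good T R P S p \<longleftrightarrow>
            (T - R) / (R - S) * p DC < 1 - p CD \<and> (T - R) / (R - P) * p DD < 1 - p CD)"
proof -
  have RS: "R - S > 0" and RP: "R - P > 0" and RS': "R > S" using assms by auto
  have pc: "p CC = 1" using assms(6) unfolding agreeable_def by simp
  have pb: "mem1 p" using assms(5) unfolding mem1_def by simp
  have nash_iff: "nash_type T R P S p \<longleftrightarrow>
      (T - R) * p DC \<le> (R - S) * (1 - p CD) \<and> (T - R) * p DD \<le> (R - P) * (1 - p CD)"
  proof
    assume nt: "nash_type T R P S p"
    show "(T - R) * p DC \<le> (R - S) * (1 - p CD) \<and> (T - R) * p DD \<le> (R - P) * (1 - p CD)"
      using necA[OF assms(1) RS' assms(5) pc] necB[OF assms(1,2,5) pc, of S] nt by force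
  next
    assume h: "(T - R) * p DC \<le> (R - S) * (1 - p CD) \<and> (T - R) * p DD \<le> (R - P) * (1 - p CD)"
    show "nash_type T R P S p"
      unfolding nash_type_def
    proof (intro conjI allI impI)
      show "agreeable p" by (rule assms(6))
      fix p0 y v assume a: "0 \<le> p0 \<and> p0 \<le> 1 \<and> Y_pattern y \<and> limit_dist p p0 y v \<and> R \<le> payY T R P S v"
      then have "valid p p0 y" using assms(5) unfolding valid_def by auto
      then have "payY T R P S v \<le> R" using suff_nash[OF assms(1-3,5) pc assms(7)] h a by blast
      then show "payY T R P S v = R" using a by linarith
    qed
  qed
  have good_iff: "good T R P S p \<longleftrightarrow>
      (T - R) * p DC < (R - S) * (1 - p CD) \<and> (T - R) * p DD < (R - P) * (1 - p CD)"
  proof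
    assume gd: "good T R P S p"
    then have "nash_type T R P S p" unfolding good_def nash_type_def by blast
    then have h: "(T - R) * p DC \<le> (R - S) * (1 - p CD)" "(T - R) * p DD \<le> (R - P) * (1 - p CD)"
      using nash_iff by auto
    have lt: "p CD < 1" by (rule pcd_lt1[OF assms(1-3,5) pc assms(7) h])
    show "(T - R) * p DC < (R - S) * (1 - p CD) \<and> (T - R) * p DD < (R - P) * (1 - p CD)"
      using eqA[OF assms(1) RS' assms(4,5) pc lt] eqB[OF assms(1) RS' assms(2,5) pc lt] gd h
      by force
  next
    assume h: "(T - R) * p DC < (R - S) * (1 - p CD) \<and> (T - R) * p DD < (R - P) * (1 - p CD)"
    show "good T R P S p"
      unfolding good_def
    proof (rule conjI[OF assms(6)], intro allI impI)
      fix p0 y v assume a: "0 \<le> p0 \<and> p0 \<le> 1 \<and> Y_pattern y \<and> limit_dist p p0 y v \<and> R \<le> payY T R P S v"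
      then have "valid p p0 y" using assms(5) unfolding valid_def by auto
      then show "payY T R P S v = R \<and> payX T R P S v = R"
        using suff_good[OF assms(1-3,5) pc] h a by blast
    qed
  qed
  have r1: "(T - R) / (R - S) * p DC \<le> 1 - p CD \<longleftrightarrow> (T - R) * p DC \<le> (R - S) * (1 - p CD)"
    by (rule ratio_le[OF RS])
  have r2: "(T - R) / (R - P) * p DD \<le> 1 - p CD \<longleftrightarrow> (T - R) * p DD \<le> (R - P) * (1 - p CD)"
    by (rule ratio_le[OF RP])
  have r3: "(T - R) / (R - S) * p DC < 1 - p CD \<longleftrightarrow> (T - R) * p DC < (R - S) * (1 - p CD)"
    by (rule ratio_less[OF RS])
  have r4: "(T - R) / (R - P) * p DD < 1 - p CD \<longleftrightarrow> (T - R) * p DD < (R - P) * (1 - p CD)"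
    by (rule ratio_less[OF RP])
  show ?thesis by (simp only: r1 r2 r3 r4 nash_iff good_iff simp_thms)
qed

end
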